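(* For every integer $t\ge1$ and every $a\in\{1,\dots,m\}$, $$q^{(a)}_t(\mathbf{z};q,\mathbf{Q})=\sum_{\mathbf{i}\in\{1,\dots,k+\ell\}^t}\mathrm{wt}(\mathbf{i})\,Q_{c(\mathbf{i})}^{a}\,\mathbf{z}_{\mathbf{i}} .$$
   Context: Fix integers $m\ge1$ and $k_1,\dots,k_m,\ell_1,\dots,\ell_m\ge0$; put $k=\sum k_a$, $\ell=\sum\ell_a$, $d_0=0$, $d_a=d_{a-1}+k_a+\ell_a$. For $i\in\{1,\dots,k+\ell\}$: parity $\bar i=\bar0$ if $d_{a-1}<i\le d_{a-1}+k_a$ for some $a$, $\bar i=\bar1$ if $d_a-\ell_a<i\le d_a$ for some $a$; color $c(i)=a$ if $d_{a-1}<i\le d_a$. Let $q,Q_1,\dots,Q_m$ be indeterminates and $z_1,\dots,z_{k+\ell}$ commuting variables (the $z_i$ of parity $\bar0$ are the "$x$-variables", those of parity $\bar1$ the "$y$-variables"); work in $\mathbb{Q}(q,Q_1,\dots,Q_m)[z_1,\dots,z_{k+\ell}]$. For a sequence $\mathbf{i}=(i_1,\dots,i_t)$: $c(\mathbf{i})$ is the color of $\max\{i_1,\dots,i_t\}$; $\mathbf{z}_{\mathbf{i}}=(-1)^{\ell_1(\mathbf{i})}z_{i_1}\cdots z_{i_t}$; $\ell_s(\mathbf{i})$ is the number of entries of parity $\bar s$; $\delta_s(\mathbf{i})$ is the number of distinct values of parity $\bar s$ among the entries, $\delta(\mathbf{i})=\delta_0(\mathbf{i})+\delta_1(\mathbf{i})$.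 Define $$q^{(a)}_t(\mathbf{z};q,\mathbf{Q})=\sum_{1\le i_1\le\cdots\le i_t\le k+\ell}Q_{c(\mathbf{i})}^a(-q^{-1})^{\ell_1(\mathbf{i})-\delta_1(\mathbf{i})}q^{\ell_0(\mathbf{i})-\delta_0(\mathbf{i})}(q-q^{-1})^{\delta(\mathbf{i})-1}\mathbf{z}_{\mathbf{i}}.$$ A sequence $\mathbf{j}=(j_1,\dots,j_t)$ is up-down if there is $p\in\{1,\dots,t\}$ with $j_1<\cdots<j_p$ and $j_p\ge j_{p+1}\ge\cdots\ge j_t$ ($p$ is the position of the first occurrence of the maximum). Its weight is $\mathrm{wt}(\mathbf{j})=0$ if $\mathbf{j}$ is not up-down, and otherwise $\mathrm{wt}(\mathbf{j})=\prod_{r=1}^{p-1}w^{<}(j_r)\prod_{r=p+1}^{t}w^{\ge}(j_r)$, where $w^{<}(j)=-q^{-1}$ if $\bar j=\bar0$, $w^{<}(j)=q$ if $\bar j=\bar1$, $w^{\ge}(j)=q$ if $\bar j=\bar0$, $w^{\ge}(j)=-q^{-1}$ if $\bar j=\bar1$. *)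

theory Defs
  imports Main
begin

(* Data: m colours; kk a = k_a, ll a = l_a for a in {1..m}.
   Indices i range over {1..k+l}; sequences are lists over {1..k+l}. *)

definition dd :: "(nat \<Rightarrow> nat) \<Rightarrow> (nat \<Rightarrow> nat) \<Rightarrow> nat \<Rightarrow> nat" where
  "dd kk ll a = (\<Sum>b=1..a. kk b + ll b)"

definition ntot :: "nat \<Rightarrow> (nat \<Rightarrow> nat) \<Rightarrow> (nat \<Rightarrow> nat) \<Rightarrow> nat" where
  "ntot m kk ll = (\<Sum>b=1..m. kk b) + (\<Sum>b=1..m. ll b)"

definition par0 :: "nat \<Rightarrow> (nat \<Rightarrow> nat) \<Rightarrow> (nat \<Rightarrow> nat) \<Rightarrow> nat \<Rightarrow> bool" where
  "par0 m kk ll i = (\<exists>a\<in>{1..m}. dd kk ll (a - 1) < i \<and> i \<le> dd kk ll (a - 1) + kk a)"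

definition par1 :: "nat \<Rightarrow> (nat \<Rightarrow> nat) \<Rightarrow> (nat \<Rightarrow> nat) \<Rightarrow> nat \<Rightarrow> bool" where
  "par1 m kk ll i = (\<exists>a\<in>{1..m}. dd kk ll a - ll a < i \<and> i \<le> dd kk ll a)"

definition colour :: "nat \<Rightarrow> (nat \<Rightarrow> nat) \<Rightarrow> (nat \<Rightarrow> nat) \<Rightarrow> nat \<Rightarrow> nat" where
  "colour m kk ll i = (THE a. a \<in> {1..m} \<and> dd kk ll (a - 1) < i \<and> i \<le> dd kk ll a)"

definition seqcolour :: "nat \<Rightarrow> (nat \<Rightarrow> nat) \<Rightarrow> (nat \<Rightarrow> nat) \<Rightarrow> nat list \<Rightarrow> nat" where
  "seqcolour m kk ll is = colour m kk ll (Max (set is))"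

definition zseq :: "nat \<Rightarrow> (nat \<Rightarrow> nat) \<Rightarrow> (nat \<Rightarrow> nat) \<Rightarrow> (nat \<Rightarrow> 'f::comm_ring_1) \<Rightarrow> nat list \<Rightarrow> 'f" where
  "zseq m kk ll z is = (-1) ^ length (filter (par1 m kk ll) is) * prod_list (map z is)"

definition lcount :: "(nat \<Rightarrow> bool) \<Rightarrow> nat list \<Rightarrow> nat" where
  "lcount P is = length (filter P is)"

definition dcount :: "(nat \<Rightarrow> bool) \<Rightarrow> nat list \<Rightarrow> nat" where
  "dcount P is = card {i \<in> set is. P i}"

definition qfun :: "nat \<Rightarrow> (nat \<Rightarrow> nat) \<Rightarrow> (nat \<Rightarrow> nat) \<Rightarrow> nat \<Rightarrow> nat \<Rightarrow>
    'f::field \<Rightarrow> (nat \<Rightarrow> 'f) \<Rightarrow> (nat \<Rightarrow> 'f) \<Rightarrow> 'f" where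
  "qfun m kk ll a t q Q z =
    (\<Sum>is \<in> {is. length is = t \<and> set is \<subseteq> {1..ntot m kk ll} \<and> sorted is}.
       Q (seqcolour m kk ll is) ^ a
       * (- inverse q) ^ (lcount (par1 m kk ll) is - dcount (par1 m kk ll) is)
       * q ^ (lcount (par0 m kk ll) is - dcount (par0 m kk ll) is)
       * (q - inverse q) ^ (dcount (par0 m kk ll) is + dcount (par1 m kk ll) is - 1)
       * zseq m kk ll z is)"

(* up-down at (0-based) position p: j_0 < ... < j_p >= j_{p+1} >= ... *)
definition updown_at :: "nat list \<Rightarrow> nat \<Rightarrow> bool" where
  "updown_at j p = (p < length j \<and> sorted_wrt (<) (take (Suc p) j) \<and> sorted_wrt (\<ge>) (drop p j))"

definition updown :: "nat list \<Rightarrow> bool" where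
  "updown j = (\<exists>p. updown_at j p)"

definition wlt :: "nat \<Rightarrow> (nat \<Rightarrow> nat) \<Rightarrow> (nat \<Rightarrow> nat) \<Rightarrow> 'f::field \<Rightarrow> nat \<Rightarrow> 'f" where
  "wlt m kk ll q j = (if par0 m kk ll j then - inverse q else q)"

definition wge :: "nat \<Rightarrow> (nat \<Rightarrow> nat) \<Rightarrow> (nat \<Rightarrow> nat) \<Rightarrow> 'f::field \<Rightarrow> nat \<Rightarrow> 'f" where
  "wge m kk ll q j = (if par0 m kk ll j then q else - inverse q)"

definition wt :: "nat \<Rightarrow> (nat \<Rightarrow> nat) \<Rightarrow> (nat \<Rightarrow> nat) \<Rightarrow> 'f::field \<Rightarrow> nat list \<Rightarrow> 'f" where
  "wt m kk ll q j =
    (if updown j then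
       (let p = (THE p. updown_at j p) in
          (\<Prod>r<p. wlt m kk ll q (j ! r)) * (\<Prod>r\<in>{Suc p..<length j}. wge m kk ll q (j ! r)))
     else 0)"

end

theory Submission
  imports Defs "HOL-Library.Multiset"
begin


lemma dd_mono: "a \<le> b \<Longrightarrow> dd kk ll a \<le> dd kk ll b"
  unfolding dd_def by (rule sum_mono2) auto

lemma dd_Suc: "dd kk ll (Suc a) = dd kk ll a + kk (Suc a) + ll (Suc a)"
  unfolding dd_def by simp

lemma ntot_dd: "ntot m kk ll = dd kk ll m"
  unfolding ntot_def dd_def by (simp add: sum.distrib)

lemma colour_exists:
  "0 < i \<Longrightarrow> i \<le> dd kk ll m \<Longrightarrow> \<exists>a\<in>{1..m}. dd kk ll (a - 1) < i \<and> i \<le> dd kk ll a"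
proof (induction m)
  case 0 then show ?case by (simp add: dd_def)
next
  case (Suc m)
  show ?case
  proof (cases "i \<le> dd kk ll m")
    case True
    then have "m \<noteq> 0" using Suc.prems by (cases m) (auto simp: dd_def)
    with Suc.IH[OF Suc.prems(1) True] show ?thesis by auto
  next
    case False
    then show ?thesis using Suc.prems by (intro bexI[of _ "Suc m"]) auto
  qed
qed

lemma interval_unique:
  assumes "a \<ge> 1" "b \<ge> 1" "dd kk ll (a - 1) < i" "i \<le> dd kk ll a"
          "dd kk ll (b - 1) < i" "i \<le> dd kk ll b"
  shows "a = b"
proof (rule ccontr)
  assume "a \<noteq> b"
  then have "a \<le> b - 1 \<or> b \<le> a - 1" by auto
  then show False
    using dd_mono[of a "b - 1" kk ll] dd_mono[of b "a - 1" kk ll] assms by auto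
qed

lemma dd_eq: "a \<ge> 1 \<Longrightarrow> dd kk ll a = dd kk ll (a - 1) + kk a + ll a"
  using dd_Suc[of kk ll "a - 1"] by simp

lemma par1_iff:
  assumes "i \<in> {1..ntot m kk ll}"
  shows "par1 m kk ll i \<longleftrightarrow> \<not> par0 m kk ll i"
proof -
  from assms have i: "0 < i" "i \<le> dd kk ll m" by (auto simp: ntot_dd)
  obtain a where a: "a \<in> {1..m}" "dd kk ll (a - 1) < i" "i \<le> dd kk ll a"
    using colour_exists[OF i] by blast
  have p0: "par0 m kk ll i \<longleftrightarrow> i \<le> dd kk ll (a - 1) + kk a"
  proof
    assume "par0 m kk ll i"
    then obtain b where b: "b \<in> {1..m}" "dd kk ll (b - 1) < i" "i \<le> dd kk ll (b - 1) + kk b"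
      unfolding par0_def by blast
    have "i \<le> dd kk ll b" using b dd_eq[of b kk ll] by auto
    then have "b = a" using interval_unique[of b a kk ll i] a b by auto
    then show "i \<le> dd kk ll (a - 1) + kk a" using b by simp
  next
    assume "i \<le> dd kk ll (a - 1) + kk a"
    then show "par0 m kk ll i" unfolding par0_def using a by blast
  qed
  have p1: "par1 m kk ll i \<longleftrightarrow> dd kk ll (a - 1) + kk a < i"
  proof
    assume "par1 m kk ll i"
    then obtain b where b: "b \<in> {1..m}" "dd kk ll b - ll b < i" "i \<le> dd kk ll b"
      unfolding par1_def by blast
    have "dd kk ll (b - 1) < i" using b dd_eq[of b kk ll] by auto
    then have "b = a" using interval_unique[of b a kk ll i] a b by auto
    then show "dd kk ll (a - 1) + kk a < i" using b dd_eq[of a kk ll] a by auto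
  next
    assume "dd kk ll (a - 1) + kk a < i"
    then show "par1 m kk ll i" unfolding par1_def using a dd_eq[of a kk ll]
      by (intro bexI[of _ a]) auto
  qed
  show ?thesis using p0 p1 by auto
qed



definition gmap :: "nat list \<Rightarrow> nat set \<Rightarrow> nat list" where
  "gmap s A = sorted_list_of_set A @ Max (set s) #
     rev (foldr remove1 (sorted_list_of_set A @ [Max (set s)]) s)"

lemma mset_foldr_remove1: "mset (foldr remove1 xs s) = mset s - mset xs"
  by (induction xs) (auto simp: mset_remove1)

lemma sorted_foldr_remove1: "sorted s \<Longrightarrow> sorted (foldr remove1 xs s)"
  by (induction xs) (auto intro: sorted_remove1)

lemma updown_at_props:
  assumes "updown_at j p"
  shows "p < length j" "\<And>r. r < p \<Longrightarrow> j ! r < j ! p"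
        "\<And>r. p \<le> r \<Longrightarrow> r < length j \<Longrightarrow> j ! r \<le> j ! p"
proof -
  show pl: "p < length j" using assms by (simp add: updown_at_def)
  have s1: "sorted_wrt (<) (take (Suc p) j)" and s2: "sorted_wrt (\<ge>) (drop p j)"
    using assms by (auto simp: updown_at_def)
  show "j ! r < j ! p" if "r < p" for r
  proof -
    have "take (Suc p) j ! r < take (Suc p) j ! p"
      using s1 that pl unfolding sorted_wrt_iff_nth_less by auto
    then show ?thesis using that by simp
  qed
  show "j ! r \<le> j ! p" if "p \<le> r" "r < length j" for r
  proof -
    have "drop p j ! (r - p) \<le> drop p j ! 0"
    proof (cases "r = p")
      case False
      then have "0 < r - p" "r - p < length (drop p j)" using that by auto
      then show ?thesis using s2 unfolding sorted_wrt_iff_nth_less by blast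
    qed simp
    then show ?thesis using that by simp
  qed
qed

lemma updown_at_unique: "updown_at j p \<Longrightarrow> updown_at j p' \<Longrightarrow> p = p'"
  using updown_at_props[of j p] updown_at_props[of j p']
  by (metis linorder_neqE_nat not_le order_less_imp_le)

lemma updown_at_Max: "updown_at j p \<Longrightarrow> Max (set j) = j ! p"
  using updown_at_props[of j p]
  by (intro Max_eqI) (auto simp: in_set_conv_nth, metis less_imp_le not_le)

lemma mset_sls: "mset (sorted_list_of_set A) = mset_set A"
  by (metis mset_sorted_list_of_multiset sorted_list_of_mset_set)

lemma sls_strict: "sorted_wrt (<) xs \<Longrightarrow> sorted_list_of_set (set xs) = xs"
  by (simp add: sorted_list_of_set_sort_remdups strict_sorted_iff distinct_remdups_id sorted_sort_id)

lemma gmap_props: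
  assumes s: "sorted s" "s \<noteq> []" and A: "A \<subseteq> set s - {Max (set s)}"
  shows "mset (gmap s A) = mset s" "updown_at (gmap s A) (card A)"
    "take (card A) (gmap s A) = sorted_list_of_set A"
    "drop (Suc (card A)) (gmap s A) = rev (foldr remove1 (sorted_list_of_set A @ [Max (set s)]) s)"
proof -
  define M where "M = Max (set s)"
  define as where "as = sorted_list_of_set A"
  define rest where "rest = foldr remove1 (as @ [M]) s"
  have g: "gmap s A = as @ M # rev rest" unfolding gmap_def M_def as_def rest_def by simp
  have fA: "finite A" using A finite_subset by blast
  have Ms: "M \<in> set s" using s unfolding M_def by simp
  have MA: "M \<notin> A" using A unfolding M_def by blast
  have las: "length as = card A" unfolding as_def by simp
  have sas: "set as = A" unfolding as_def using fA by simp
  have m1: "mset (as @ [M]) = mset_set (insert M A)"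
    using fA MA by (simp add: as_def mset_sls)
  have sub: "mset (as @ [M]) \<subseteq># mset s"
    unfolding m1 subseteq_mset_def
  proof
    fix x
    show "count (mset_set (insert M A)) x \<le> count (mset s) x"
    proof (cases "x \<in> insert M A")
      case True
      then have "x \<in> set s" using A Ms by blast
      then have "0 < count (mset s) x" by simp
      then show ?thesis using fA True by simp
    qed (use fA in simp)
  qed
  have mrest: "mset rest = mset s - mset (as @ [M])"
    unfolding rest_def by (rule mset_foldr_remove1)
  have "mset (gmap s A) = mset (as @ [M]) + mset rest" by (simp add: g)
  also have "\<dots> = mset s" unfolding mrest using sub by (rule subset_mset.add_diff_inverse)
  finally show "mset (gmap s A) = mset s" .
  have restin: "set rest \<subseteq> set s"
    using mrest by (metis in_diffD set_mset_mset subsetI)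
  have restle: "\<forall>x\<in>set rest. x \<le> M"
    using restin s unfolding M_def by auto
  have asl: "\<forall>x\<in>set as. x < M"
    using A sas s unfolding M_def
    by (metis DiffE List.finite_set Max_ge insertCI insert_Diff order_le_imp_less_or_eq subsetD)
  have srest: "sorted rest" unfolding rest_def using s(1) by (rule sorted_foldr_remove1)
  show "take (card A) (gmap s A) = sorted_list_of_set A"
    unfolding g las[symmetric] by (simp add: as_def)
  show "drop (Suc (card A)) (gmap s A) = rev (foldr remove1 (sorted_list_of_set A @ [Max (set s)]) s)"
    unfolding g las[symmetric] by (simp add: as_def rest_def M_def)
  show "updown_at (gmap s A) (card A)"
    unfolding updown_at_def g las[symmetric]
  proof (intro conjI)
    show "length as < length (as @ M # rev rest)" by simp
    have "take (Suc (length as)) (as @ M # rev rest) = as @ [M]" by simp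
    moreover have "sorted_wrt (<) (as @ [M])"
      using asl by (simp add: sorted_wrt_append as_def)
    ultimately show "sorted_wrt (<) (take (Suc (length as)) (as @ M # rev rest))" by simp
    have "sorted_wrt (\<ge>) (rev rest)"
      using srest by (simp add: sorted_wrt_rev)
    then show "sorted_wrt (\<ge>) (drop (length as) (as @ M # rev rest))"
      using restle by simp
  qed
qed



lemma prod_list_nth: "prod_list (xs::'a::comm_monoid_mult list) = (\<Prod>i\<in>{0..<length xs}. xs ! i)"
  by (rule prod.list_conv_set_nth)

lemma wt_at:
  assumes "updown_at j p"
  shows "wt m kk ll q j = prod_list (map (wlt m kk ll q) (take p j)) * prod_list (map (wge m kk ll q) (drop (Suc p) j))"
proof -
  have pl: "p < length j" using updown_at_props(1)[OF assms] .
  have ud: "updown j" using assms unfolding updown_def by blast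
  have th: "(THE p. updown_at j p) = p"
    using assms updown_at_unique by (intro the_equality) auto
  have e1: "(\<Prod>r<p. wlt m kk ll q (j ! r)) = prod_list (map (wlt m kk ll q) (take p j))"
    unfolding prod_list_nth using pl by (simp add: lessThan_atLeast0)
  have "prod_list (map (wge m kk ll q) (drop (Suc p) j)) = (\<Prod>i\<in>{0..<length j - Suc p}. wge m kk ll q (j ! (i + Suc p)))"
    unfolding prod_list_nth using pl by (simp add: add.commute)
  also have "\<dots> = (\<Prod>r\<in>{0 + Suc p..<(length j - Suc p) + Suc p}. wge m kk ll q (j ! r))"
    by (rule prod.shift_bounds_nat_ivl[symmetric])
  also have "\<dots> = (\<Prod>r\<in>{Suc p..<length j}. wge m kk ll q (j ! r))"
  proof -
    have eq: "(length j - Suc p) + Suc p = length j" using pl by simp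
    show ?thesis by (simp only: eq add_0)
  qed
  finally show ?thesis unfolding wt_def using ud th e1 by (simp add: Let_def)
qed

lemma gmap_inv:
  assumes "updown_at j p"
  shows "gmap (sort j) (set (take p j)) = j"
proof -
  have pl: "p < length j" using updown_at_props(1)[OF assms] .
  have M: "Max (set (sort j)) = j ! p" using updown_at_Max[OF assms] by simp
  have tS: "take (Suc p) j = take p j @ [j ! p]" using pl by (simp add: take_Suc_conv_app_nth)
  have s1: "sorted_wrt (<) (take (Suc p) j)" and s2: "sorted_wrt (\<ge>) (drop p j)"
    using assms by (auto simp: updown_at_def)
  have st: "sorted_wrt (<) (take p j)" using s1 unfolding tS by (simp add: sorted_wrt_append)
  have dS: "drop p j = j ! p # drop (Suc p) j" using pl by (simp add: Cons_nth_drop_Suc)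
  have sd: "sorted (rev (drop (Suc p) j))"
    using s2 unfolding dS by (simp add: sorted_wrt_rev)
  define rest where "rest = foldr remove1 (take p j @ [j ! p]) (sort j)"
  have mr: "mset rest = mset (rev (drop (Suc p) j))"
  proof -
    have "mset rest = mset j - mset (take (Suc p) j)"
      unfolding rest_def mset_foldr_remove1 tS by simp
    also have "\<dots> = mset (drop (Suc p) j)"
      by (metis add_diff_cancel_left' append_take_drop_id mset_append)
    finally show ?thesis by simp
  qed
  have sr: "sorted rest" unfolding rest_def by (rule sorted_foldr_remove1) simp
  have "rest = rev (drop (Suc p) j)"
    using properties_for_sort[OF mr[symmetric] sd] properties_for_sort[OF refl sr] mr
    by (metis properties_for_sort sr)
  then have "rev rest = drop (Suc p) j" by simp
  then show ?thesis
    unfolding gmap_def M sls_strict[OF st] rest_def[symmetric]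
    using pl by (simp add: id_take_nth_drop[symmetric])
qed



lemma prod_mset_image_count:
  assumes "finite B" "set_mset X \<subseteq> B"
  shows "prod_mset (image_mset f X) = (\<Prod>v\<in>B. (f v :: 'a::comm_monoid_mult) ^ count X v)"
  using assms(2)
proof (induction X)
  case empty then show ?case by simp
next
  case (add x X)
  then have xB: "x \<in> B" and XB: "set_mset X \<subseteq> B" by auto
  have "(\<Prod>v\<in>B. f v ^ count (add_mset x X) v) = (\<Prod>v\<in>B. f v ^ count X v * (if v = x then f v else 1))"
    by (intro prod.cong) (auto simp: power_add mult.commute)
  also have "\<dots> = (\<Prod>v\<in>B. f v ^ count X v) * f x"
    using assms(1) xB by (simp add: prod.distrib prod.delta)
  finally show ?case using add.IH[OF XB] by (simp add: mult.commute)
qed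

lemma wt_gmap:
  assumes s: "sorted s" "s \<noteq> []" and A: "A \<subseteq> set s - {Max (set s)}"
  shows "wt m kk ll q (gmap s A) =
     (\<Prod>v\<in>A. wlt m kk ll q v) * (\<Prod>v\<in>set s. wge m kk ll q v ^ (count_list s v - 1))
     * (\<Prod>v\<in>(set s - {Max (set s)}) - A. wge m kk ll q v)"
proof -
  define M where "M = Max (set s)"
  define wl where "wl = wlt m kk ll q"
  define wg where "wg = wge m kk ll q"
  define rest where "rest = foldr remove1 (sorted_list_of_set A @ [M]) s"
  have fA: "finite A" using A finite_subset by blast
  have Ms: "M \<in> set s" using s unfolding M_def by simp
  have MA: "M \<notin> A" using A unfolding M_def by blast
  have "wt m kk ll q (gmap s A) = prod_list (map wl (sorted_list_of_set A)) * prod_list (map wg (rev rest))"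
    using wt_at[OF gmap_props(2)[OF s A]] gmap_props(3,4)[OF s A]
    unfolding wl_def wg_def rest_def M_def by simp
  also have "prod_list (map wl (sorted_list_of_set A)) = (\<Prod>v\<in>A. wl v)"
    using fA by (simp add: prod.distinct_set_conv_list[symmetric])
  also have "prod_list (map wg (rev rest)) = prod_mset (image_mset wg (mset rest))"
    by (metis mset_map mset_rev prod_mset_prod_list)
  also have "\<dots> = (\<Prod>v\<in>set s. wg v ^ count (mset rest) v)"
  proof (rule prod_mset_image_count)
    show "set_mset (mset rest) \<subseteq> set s"
      unfolding rest_def mset_foldr_remove1 by (metis in_diffD set_mset_mset subsetI)
  qed simp
  also have "\<dots> = (\<Prod>v\<in>set s. wg v ^ (count_list s v - 1) * (if v \<in> (set s - {M}) - A then wg v else 1))"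
  proof (rule prod.cong)
    fix v assume vs: "v \<in> set s"
    then have "count_list s v \<noteq> 0" by (simp add: count_list_0_iff)
    then have c1: "count_list s v \<ge> 1" by simp
    have "count (mset rest) v = count_list s v - (if v \<in> insert M A then 1 else 0)"
      unfolding rest_def mset_foldr_remove1 using fA MA
      by (auto simp: mset_sls count_mset)
    also have "\<dots> = (count_list s v - 1) + (if v \<in> (set s - {M}) - A then 1 else 0)"
      using c1 vs by auto
    finally show "wg v ^ count (mset rest) v = wg v ^ (count_list s v - 1) * (if v \<in> (set s - {M}) - A then wg v else 1)"
      by (simp add: power_add)
  qed simp
  also have "\<dots> = (\<Prod>v\<in>set s. wg v ^ (count_list s v - 1)) * (\<Prod>v\<in>(set s - {M}) - A. wg v)"
  proof -
    have "(\<Prod>v\<in>set s. (if v \<in> (set s - {M}) - A then wg v else 1)) = (\<Prod>v\<in>set s \<inter> ((set s - {M}) - A). wg v)"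
      by (simp add: prod.inter_restrict)
    also have "set s \<inter> ((set s - {M}) - A) = (set s - {M}) - A" by blast
    finally show ?thesis by (simp add: prod.distrib)
  qed
  finally show ?thesis unfolding wl_def wg_def M_def by (simp add: mult.assoc)
qed

lemma sum_wt_gmap:
  assumes s: "sorted s" "s \<noteq> []"
  shows "(\<Sum>A\<in>Pow (set s - {Max (set s)}). wt m kk ll q (gmap s A)) =
     (\<Prod>v\<in>set s. wge m kk ll q v ^ (count_list s v - 1)) * (q - inverse q) ^ (card (set s) - 1)"
proof -
  define D where "D = set s - {Max (set s)}"
  define C where "C = (\<Prod>v\<in>set s. wge m kk ll q v ^ (count_list s v - 1))"
  have fD: "finite D" unfolding D_def by simp
  have "(\<Sum>A\<in>Pow D. wt m kk ll q (gmap s A)) =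
        (\<Sum>A\<in>Pow D. C * ((\<Prod>v\<in>A. wlt m kk ll q v) * (\<Prod>v\<in>D - A. wge m kk ll q v)))"
    by (intro sum.cong refl) (simp add: wt_gmap[OF s] D_def C_def mult_ac)
  also have "\<dots> = C * (\<Prod>v\<in>D. wlt m kk ll q v + wge m kk ll q v)"
    by (simp add: prod_add[OF fD] sum_distrib_left)
  also have "(\<Prod>v\<in>D. wlt m kk ll q v + wge m kk ll q v) = (\<Prod>v\<in>D. q - inverse q)"
    by (intro prod.cong refl) (simp add: wlt_def wge_def)
  also have "\<dots> = (q - inverse q) ^ (card (set s) - 1)"
    using s unfolding D_def by (simp add: card_Diff_singleton)
  finally show ?thesis unfolding D_def C_def .
qed



lemma length_filter_count: "length (filter P xs) = (\<Sum>v\<in>{x\<in>set xs. P x}. count_list xs v)"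
proof -
  have "length (filter P xs) = sum_list (map (\<lambda>x. if P x then 1 else 0) xs)"
    by (induction xs) auto
  also have "\<dots> = (\<Sum>v\<in>set xs. count_list xs v * (if P v then 1 else 0))"
    by (rule sum_list_map_eq_sum_count)
  also have "\<dots> = (\<Sum>v\<in>{x\<in>set xs. P x}. count_list xs v)"
    by (simp add: sum.inter_filter if_distrib cong: if_cong)
  finally show ?thesis .
qed

lemma lcount_minus_dcount:
  "lcount P xs - dcount P xs = (\<Sum>v\<in>{x\<in>set xs. P x}. count_list xs v - 1)"
proof -
  let ?X = "{x\<in>set xs. P x}"
  have "(\<Sum>v\<in>?X. count_list xs v) = (\<Sum>v\<in>?X. (count_list xs v - 1) + 1)"
  proof (intro sum.cong refl)
    fix v assume "v \<in> ?X"
    then have "count_list xs v \<noteq> 0" by (simp add: count_list_0_iff)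
    then show "count_list xs v = count_list xs v - 1 + 1" by simp
  qed
  also have "\<dots> = (\<Sum>v\<in>?X. count_list xs v - 1) + card ?X"
    by (simp only: sum.distrib card_eq_sum)
  finally show ?thesis unfolding lcount_def dcount_def length_filter_count by simp
qed

lemma F_mset:
  assumes "mset x = mset y"
  shows "seqcolour m kk ll x = seqcolour m kk ll y" "zseq m kk ll z x = zseq m kk ll z y"
proof -
  have "set x = set y" using assms by (metis set_mset_mset)
  then show "seqcolour m kk ll x = seqcolour m kk ll y" unfolding seqcolour_def by simp
  have "length (filter (par1 m kk ll) x) = length (filter (par1 m kk ll) y)"
    by (metis assms mset_filter size_mset)
  moreover have "prod_list (map z x) = prod_list (map z y)"
    by (metis assms mset_map prod_mset_prod_list)
  ultimately show "zseq m kk ll z x = zseq m kk ll z y" unfolding zseq_def by simp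
qed

theorem mainTheorem2:
  fixes m :: nat and kk ll :: "nat \<Rightarrow> nat" and t a :: nat
    and q :: "'f::field_char_0" and Q z :: "nat \<Rightarrow> 'f"
  assumes "m \<ge> 1" and "t \<ge> 1" and "a \<in> {1..m}" and "q \<noteq> 0"
  shows "qfun m kk ll a t q Q z =
    (\<Sum>is \<in> {is. length is = t \<and> set is \<subseteq> {1..ntot m kk ll}}.
       wt m kk ll q is * Q (seqcolour m kk ll is) ^ a * zseq m kk ll z is)"
proof -
  define N where "N = ntot m kk ll"
  define L where "L = {is::nat list. length is = t \<and> set is \<subseteq> {1..N}}"
  define S where "S = {is::nat list. length is = t \<and> set is \<subseteq> {1..N} \<and> sorted is}"
  define U where "U = {j\<in>L. updown j}"
  define F where "F = (\<lambda>j. Q (seqcolour m kk ll j) ^ a * zseq m kk ll z j)"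
  define Dom where "Dom = Sigma S (\<lambda>s. Pow (set s - {Max (set s)}))"
  have finL: "finite L"
  proof -
    have "L = {xs. set xs \<subseteq> {1..N} \<and> length xs = t}" unfolding L_def by blast
    then show ?thesis using finite_lists_length_eq[of "{1..N}" t] by simp
  qed
  have finS: "finite S" using finL by (rule finite_subset[rotated]) (auto simp: S_def L_def)
  have ne: "\<And>xs. length xs = t \<Longrightarrow> xs \<noteq> []" using assms(2) by auto
  have "(\<Sum>is\<in>L. wt m kk ll q is * Q (seqcolour m kk ll is) ^ a * zseq m kk ll z is)
      = (\<Sum>j\<in>L. wt m kk ll q j * F j)" by (simp add: F_def mult.assoc)
  also have "\<dots> = (\<Sum>j\<in>U. wt m kk ll q j * F j)"
    by (rule sum.mono_neutral_right[OF finL]) (auto simp: U_def wt_def)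
  also have "\<dots> = (\<Sum>(s, A)\<in>Dom. wt m kk ll q (gmap s A) * F s)"
  proof (rule sum.reindex_bij_witness[where i = "\<lambda>(s, A). gmap s A"
        and j = "\<lambda>l. (sort l, set (take (THE p. updown_at l p) l))"])
    fix l assume l: "l \<in> U"
    then obtain p where p: "updown_at l p" unfolding U_def updown_def by blast
    have th: "(THE p. updown_at l p) = p"
      using p updown_at_unique by (intro the_equality) auto
    show "(case (sort l, set (take (THE p. updown_at l p) l)) of (s, A) \<Rightarrow> gmap s A) = l"
      using gmap_inv[OF p] th by simp
    show "(case (sort l, set (take (THE p. updown_at l p) l)) of (s, A) \<Rightarrow> wt m kk ll q (gmap s A) * F s)
          = wt m kk ll q l * F l"
    proof -
      have ms: "mset (sort l) = mset l" by simp
      have z1: "zseq m kk ll z (sort l) = zseq m kk ll z l" by (rule F_mset(2)[OF ms])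
      have c1: "seqcolour m kk ll (sort l) = seqcolour m kk ll l" by (rule F_mset(1)[OF ms])
      show ?thesis using gmap_inv[OF p] th by (simp add: F_def z1 c1)
    qed
    have sub: "set (take p l) \<subseteq> set (sort l) - {Max (set (sort l))}"
    proof
      fix x assume "x \<in> set (take p l)"
      then obtain r where r: "r < p" "r < length l" "x = l ! r"
        by (auto simp: in_set_conv_nth)
      have "x < l ! p" using updown_at_props(2)[OF p r(1)] r by simp
      then show "x \<in> set (sort l) - {Max (set (sort l))}"
        using updown_at_Max[OF p] r by simp
    qed
    show "(sort l, set (take (THE p. updown_at l p) l)) \<in> Dom"
      using l sub th unfolding Dom_def S_def U_def L_def by auto
  next
    fix b assume b: "b \<in> Dom"
    obtain s A where sA: "b = (s, A)" by (cases b)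
    have s: "sorted s" "s \<noteq> []" "length s = t" "set s \<subseteq> {1..N}"
      and A: "A \<subseteq> set s - {Max (set s)}"
      using b ne unfolding sA Dom_def S_def by auto
    have fA: "finite A" using A finite_subset by blast
    have th: "(THE p. updown_at (gmap s A) p) = card A"
      using gmap_props(2)[OF s(1,2) A] updown_at_unique by (intro the_equality) auto
    have so: "sort (gmap s A) = s"
      by (rule properties_for_sort) (use gmap_props(1)[OF s(1,2) A] s(1) in auto)
    show "(sort ((case b of (s, A) \<Rightarrow> gmap s A)),
           set (take (THE p. updown_at (case b of (s, A) \<Rightarrow> gmap s A) p) (case b of (s, A) \<Rightarrow> gmap s A))) = b"
      using so th gmap_props(3)[OF s(1,2) A] fA unfolding sA by simp
    have ms: "mset (gmap s A) = mset s" by (rule gmap_props(1)[OF s(1,2) A])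
    have "length (gmap s A) = length s" using ms by (metis size_mset)
    moreover have "set (gmap s A) = set s" using ms by (metis set_mset_mset)
    moreover have "updown (gmap s A)" using gmap_props(2)[OF s(1,2) A] unfolding updown_def by blast
    ultimately show "(case b of (s, A) \<Rightarrow> gmap s A) \<in> U"
      using s unfolding sA U_def L_def by simp
  qed
  also have "\<dots> = (\<Sum>s\<in>S. (\<Sum>A\<in>Pow (set s - {Max (set s)}). wt m kk ll q (gmap s A)) * F s)"
    unfolding Dom_def
    by (subst sum.Sigma[symmetric]) (auto simp: finS sum_distrib_right)
  also have "\<dots> = (\<Sum>s\<in>S. Q (seqcolour m kk ll s) ^ a
       * (- inverse q) ^ (lcount (par1 m kk ll) s - dcount (par1 m kk ll) s)
       * q ^ (lcount (par0 m kk ll) s - dcount (par0 m kk ll) s)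
       * (q - inverse q) ^ (dcount (par0 m kk ll) s + dcount (par1 m kk ll) s - 1)
       * zseq m kk ll z s)"
  proof (intro sum.cong refl)
    fix s assume sS: "s \<in> S"
    then have s: "sorted s" "s \<noteq> []" "set s \<subseteq> {1..N}" using ne unfolding S_def by auto
    have p1: "\<And>v. v \<in> set s \<Longrightarrow> par1 m kk ll v \<longleftrightarrow> \<not> par0 m kk ll v"
      using s(3) par1_iff unfolding N_def by blast
    let ?X0 = "{x\<in>set s. par0 m kk ll x}" and ?X1 = "{x\<in>set s. par1 m kk ll x}"
    have X1: "?X1 = set s \<inter> - {x. par0 m kk ll x}" using p1 by blast
    have X0: "?X0 = set s \<inter> {x. par0 m kk ll x}" by blast
    have "(\<Prod>v\<in>set s. wge m kk ll q v ^ (count_list s v - 1))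
        = (\<Prod>v\<in>set s. if par0 m kk ll v then q ^ (count_list s v - 1) else (- inverse q) ^ (count_list s v - 1))"
      by (intro prod.cong refl) (simp add: wge_def)
    also have "\<dots> = (\<Prod>v\<in>?X0. q ^ (count_list s v - 1)) * (\<Prod>v\<in>?X1. (- inverse q) ^ (count_list s v - 1))"
      unfolding X0 X1 by (rule prod.If_cases) simp
    also have "\<dots> = q ^ (lcount (par0 m kk ll) s - dcount (par0 m kk ll) s)
        * (- inverse q) ^ (lcount (par1 m kk ll) s - dcount (par1 m kk ll) s)"
      unfolding lcount_minus_dcount power_sum by simp
    finally have C: "(\<Prod>v\<in>set s. wge m kk ll q v ^ (count_list s v - 1)) = \<dots>" .
    have u: "?X0 \<union> ?X1 = set s" and i: "?X0 \<inter> ?X1 = {}" using p1 by auto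
    have "card ?X0 + card ?X1 = card (set s)"
      using card_Un_disjoint[of ?X0 ?X1] u i by simp
    then have D: "dcount (par0 m kk ll) s + dcount (par1 m kk ll) s = card (set s)"
      unfolding dcount_def .
    show "(\<Sum>A\<in>Pow (set s - {Max (set s)}). wt m kk ll q (gmap s A)) * F s = Q (seqcolour m kk ll s) ^ a
       * (- inverse q) ^ (lcount (par1 m kk ll) s - dcount (par1 m kk ll) s)
       * q ^ (lcount (par0 m kk ll) s - dcount (par0 m kk ll) s)
       * (q - inverse q) ^ (dcount (par0 m kk ll) s + dcount (par1 m kk ll) s - 1)
       * zseq m kk ll z s"
      unfolding sum_wt_gmap[OF s(1,2)] C D F_def by (simp add: mult_ac)
  qed
  also have "\<dots> = qfun m kk ll a t q Q z"
    unfolding qfun_def S_def N_def ..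
  finally show ?thesis unfolding L_def N_def by simp
qed

end
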